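(* Let $(M,g)$ be a continuous spacetime, let $p\in M$ and let $(\varphi,U)$ be a cylindrical chart around $p$. Let $\gamma\colon[a,b]\to U$ be an absolutely continuous future directed causal curve. Then there is a strictly increasing, absolutely continuous $\phi\colon[c,d]\to[a,b]$ such that the reparametrisation $\tilde\gamma=\gamma\circ\phi$ satisfies, in the chart $\varphi$, $$\tilde\gamma(t)=(t,\vec\gamma(t))\quad\text{for all } t\in[c,d].$$
   Context: A continuous spacetime $(M,g)$ consists of a smooth, connected, second countable Hausdorff manifold $M$ with a continuous, time-oriented Lorentzian metric $g$. Absolutely continuous causal curves: an absolutely continuous curve $\gamma$ (absolutely continuous in charts) is causal if $g(\dot\gamma,\dot\gamma)\le 0$ and $\dot\gamma\ne 0$ almost everywhere. It is future directed if $\dot\gamma$ lies in the future light cone almost everywhere. Wider cones: for Lorentzian metrics one writes $g_1\prec g_2$ if every nonzero $X$ with $g_1(X,X)\le0$ satisfies $g_2(X,X)<0$. Cylindrical charts: for $C>0$ let $\eta_C=-C\,dt^2+\sum_{i=1}^n (dx^i)^2$ on $\mathbb{R}^{n+1}$. A chart $(\varphi=(t,x^1,\dots,x^n),U)$ centred at $p$ is cylindrical if: - $U$ is relatively compact; - $\varphi(U)=L\times V$, where $L\ni 0$ is an interval and $0\in V\subseteq\mathbb{R}^n$ is open; - $(\varphi_*g)(0)=\eta_1$; - there is $C>1$ with $\eta_{C^{-1}}\prec\varphi_*g\prec\eta_C$ on $L\times V$. *)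

theory Defs
  imports "HOL-Analysis.Analysis"
begin

text \<open>Coordinate points / tangent vectors of the chart image are elements of
  real \<times> real^'n, written (t, x).\<close>

type_synonym ('n) cvec = "real \<times> (real ^ ('n::finite))"

definition absolutely_continuous_on ::
  "real set \<Rightarrow> (real \<Rightarrow> 'b::real_normed_vector) \<Rightarrow> bool" where
  "absolutely_continuous_on S f \<longleftrightarrow>
    (\<forall>e>0. \<exists>d>0. \<forall>(n::nat) (u::nat \<Rightarrow> real) (v::nat \<Rightarrow> real).
       (\<forall>i<n. u i \<le> v i \<and> {u i..v i} \<subseteq> S) \<and>
       (\<forall>i<n. \<forall>j<n. i \<noteq> j \<longrightarrow> v i \<le> u j \<or> v j \<le> u i) \<and>
       (\<Sum>i<n. v i - u i) < d
       \<longrightarrow> (\<Sum>i<n. norm (f (v i) - f (u i))) < e)"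

definition eta :: "real \<Rightarrow> ('n::finite) cvec \<Rightarrow> ('n::finite) cvec \<Rightarrow> real" where
  "eta C X Y = - C * fst X * fst Y + snd X \<bullet> snd Y"

definition lorentzian_form :: "('a::real_vector \<Rightarrow> 'a \<Rightarrow> real) \<Rightarrow> bool" where
  "lorentzian_form B \<longleftrightarrow> bilinear B \<and> (\<forall>X Y. B X Y = B Y X) \<and>
     (\<exists>T. B T T < 0 \<and> (\<forall>X. X \<noteq> 0 \<and> B T X = 0 \<longrightarrow> B X X > 0))"

definition wider_cones :: "('a::real_vector \<Rightarrow> 'a \<Rightarrow> real) \<Rightarrow> ('a \<Rightarrow> 'a \<Rightarrow> real) \<Rightarrow> bool" where
  "wider_cones g1 g2 \<longleftrightarrow> (\<forall>X. X \<noteq> 0 \<and> g1 X X \<le> 0 \<longrightarrow> g2 X X < 0)"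

text \<open>Future directed causal vector at a point, w.r.t. metric form B and the
  time orientation vector T at that point.\<close>
definition future_causal :: "('a::real_vector \<Rightarrow> 'a \<Rightarrow> real) \<Rightarrow> 'a \<Rightarrow> 'a \<Rightarrow> bool" where
  "future_causal B T X \<longleftrightarrow> X \<noteq> 0 \<and> B X X \<le> 0 \<and> B T X < 0"

text \<open>Cylindrical chart centred at p, in terms of the coordinate expression G = phi_* g
  of the metric on phi(U) = L \<times> V.\<close>
definition cylindrical_chart ::
  "'m::topological_space set \<Rightarrow> ('m \<Rightarrow> ('n::finite) cvec) \<Rightarrow> (('n::finite) cvec \<Rightarrow> ('n::finite) cvec \<Rightarrow> ('n::finite) cvec \<Rightarrow> real)
    \<Rightarrow> 'm \<Rightarrow> real set \<Rightarrow> (real ^ 'n) set \<Rightarrow> bool" where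
  "cylindrical_chart U \<phi> G p L V \<longleftrightarrow>
     open U \<and> p \<in> U \<and> compact (closure U) \<and>
     (\<exists>\<psi>. homeomorphism U (L \<times> V) \<phi> \<psi>) \<and>
     is_interval L \<and> open L \<and> 0 \<in> L \<and> open V \<and> 0 \<in> V \<and>
     \<phi> p = (0, 0) \<and>
     G (0, 0) = eta 1 \<and>
     (\<exists>C>1. \<forall>q\<in>L \<times> V. wider_cones (eta (inverse C)) (G q) \<and> wider_cones (G q) (eta C))"

end

theory Submission
  imports Defs
begin

lemma expand_diff:
  fixes B :: "'a::real_vector \<Rightarrow> 'a \<Rightarrow> real"
  assumes bil: "bilinear B" and sym: "B Y X = B X Y"
  shows "B (a *\<^sub>R X - b *\<^sub>R Y) (a *\<^sub>R X - b *\<^sub>R Y) = a^2 * B X X - 2 * (a * b) * B X Y + b^2 * B Y Y"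
  using sym by (simp add: bilinear_rsub[OF bil] bilinear_rmul[OF bil] bilinear_lsub[OF bil] bilinear_lmul[OF bil] power2_eq_square algebra_simps)

lemma pos_perp:
  fixes B :: "'a::real_vector \<Rightarrow> 'a \<Rightarrow> real"
  assumes L: "lorentzian_form B" and T: "B T T < 0" and XT: "B T X = 0" and X0: "X \<noteq> 0"
  shows "B X X > 0"
proof (rule ccontr)
  assume neg: "\<not> B X X > 0"
  from L obtain T0 where bil: "bilinear B" and sym: "\<And>X Y. B X Y = B Y X"
    and T0: "B T0 T0 < 0" and pos: "\<And>Z. Z \<noteq> 0 \<and> B T0 Z = 0 \<Longrightarrow> B Z Z > 0"
    unfolding lorentzian_form_def by blast
  have T00: "T \<noteq> 0" using T by (auto simp: bilinear_lzero[OF bil])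
  have lT: "B T0 T \<noteq> 0"
  proof
    assume "B T0 T = 0"
    hence "B T T > 0" using pos T00 by blast
    with T show False by simp
  qed
  define Z where "Z = B T0 X *\<^sub>R T - B T0 T *\<^sub>R X"
  have lZ: "B T0 Z = 0" unfolding Z_def
    by (simp add: bilinear_rsub[OF bil] bilinear_rmul[OF bil])
  have Z0: "Z \<noteq> 0"
  proof
    assume Z: "Z = 0"
    hence "B T Z = 0" by (simp add: bilinear_rzero[OF bil])
    hence "B T0 X * B T T = 0" unfolding Z_def using XT by (simp add: bilinear_rsub[OF bil] bilinear_rmul[OF bil])
    hence "B T0 X = 0" using T by simp
    with Z have "B T0 T *\<^sub>R X = 0" unfolding Z_def by simp
    with lT X0 show False by simp
  qed
  have "B Z Z = (B T0 X)^2 * B T T - 2 * (B T0 X * B T0 T) * B T X + (B T0 T)^2 * B X X"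
    unfolding Z_def by (rule expand_diff[OF bil sym])
  also have "\<dots> = (B T0 X)^2 * B T T + (B T0 T)^2 * B X X" using XT by simp
  also have "\<dots> \<le> 0"
  proof -
    have "(B T0 X)^2 * B T T \<le> 0" using T by (simp add: mult_nonneg_nonpos)
    moreover have "(B T0 T)^2 * B X X \<le> 0" using neg by (simp add: mult_nonneg_nonpos)
    ultimately show ?thesis by linarith
  qed
  finally show False using pos Z0 lZ by fastforce
qed
lemma same_cone:
  fixes B :: "'a::real_vector \<Rightarrow> 'a \<Rightarrow> real"
  assumes L: "lorentzian_form B" and T: "B T T < 0"
    and X: "B X X \<le> 0" "B T X < 0" and Y: "B Y Y \<le> 0" "B T Y < 0"
  shows "B X Y \<le> 0"
proof -
  from L have bil: "bilinear B" and sym: "\<And>X Y. B X Y = B Y X"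
    unfolding lorentzian_form_def by blast+
  define \<alpha> where "\<alpha> = B T X"
  define \<beta> where "\<beta> = B T Y"
  define Z where "Z = \<beta> *\<^sub>R X - \<alpha> *\<^sub>R Y"
  have ZT: "B T Z = 0" unfolding Z_def \<alpha>_def \<beta>_def using bil
    by (simp add: bilinear_rsub bilinear_rmul)
  have Zp: "B Z Z \<ge> 0"
  proof (cases "Z = 0")
    case True thus ?thesis using bil by (simp add: bilinear_rzero)
  next
    case False thus ?thesis using pos_perp[OF L T ZT] by fastforce
  qed
  have "B Z Z = \<beta>^2 * B X X - 2 * (\<alpha> * \<beta>) * B X Y + \<alpha>^2 * B Y Y"
    unfolding Z_def using bil sym[of Y X]
    by (simp add: bilinear_rsub bilinear_rmul bilinear_lsub bilinear_lmul power2_eq_square algebra_simps)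
  with Zp have "2 * (\<alpha> * \<beta>) * B X Y \<le> \<beta>^2 * B X X + \<alpha>^2 * B Y Y" by linarith
  also have "\<dots> \<le> 0" using X Y by (intro add_nonpos_nonpos mult_nonneg_nonpos) auto
  finally have "(\<alpha> * \<beta>) * B X Y \<le> 0" by simp
  moreover have "\<alpha> * \<beta> > 0" using X Y \<alpha>_def \<beta>_def by (simp add: mult_neg_neg)
  ultimately show ?thesis using mult_le_cancel_left_pos[of "\<alpha> * \<beta>" "B X Y" 0] by simp
qed

lemma expand_sum:
  fixes B :: "'a::real_vector \<Rightarrow> 'a \<Rightarrow> real"
  assumes bil: "bilinear B" and sym: "B e v = B v e"
  shows "B (v + \<mu> *\<^sub>R e) (v + \<mu> *\<^sub>R e) = B v v + 2 * \<mu> * B v e + \<mu>^2 * B e e"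
  using sym by (simp add: bilinear_radd[OF bil] bilinear_rmul[OF bil] bilinear_ladd[OF bil] bilinear_lmul[OF bil] power2_eq_square algebra_simps)

lemma time_pos:
  fixes B :: "('n::finite) cvec \<Rightarrow> ('n::finite) cvec \<Rightarrow> real"
  assumes L: "lorentzian_form B" and T: "B T T < 0" and Te: "B T (1,0) < 0"
    and C: "C > 1" and w1: "wider_cones (eta (inverse C)) B" and w2: "wider_cones B (eta C)"
    and v: "future_causal B T v"
  shows "fst v > 0"
proof (rule ccontr)
  assume "\<not> fst v > 0"
  define \<mu> where "\<mu> = - fst v"
  have mu: "\<mu> \<ge> 0" using \<open>\<not> fst v > 0\<close> \<mu>_def by simp
  define e :: "'n cvec" where "e = (1,0)"
  from L have bil: "bilinear B" and sym: "\<And>X Y. B X Y = B Y X"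
    unfolding lorentzian_form_def by blast+
  have "eta (inverse C) e e \<le> 0" using C by (simp add: eta_def e_def)
  moreover have "e \<noteq> 0" by (simp add: e_def zero_prod_def)
  ultimately have ee: "B e e < 0" using w1 unfolding wider_cones_def by blast
  have vv: "B v v \<le> 0" "B T v < 0" "v \<noteq> 0" using v unfolding future_causal_def by auto
  have Te': "B T e < 0" using Te e_def by simp
  have ve: "B v e \<le> 0" using same_cone[OF L T vv(1,2)] ee Te' by simp
  define w where "w = v + \<mu> *\<^sub>R e"
  have "B w w = B v v + 2 * \<mu> * B v e + \<mu>^2 * B e e"
    unfolding w_def by (rule expand_sum[OF bil sym])
  moreover have "2 * \<mu> * B v e \<le> 0" using mu ve by (simp add: mult_nonneg_nonpos)
  moreover have "\<mu>^2 * B e e \<le> 0" using ee by (simp add: mult_nonneg_nonpos)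
  ultimately have ww: "B w w \<le> 0" using vv(1) by linarith
  have w0: "w \<noteq> 0"
  proof
    assume "w = 0"
    hence "v = - (\<mu> *\<^sub>R e)" unfolding w_def by (simp add: eq_neg_iff_add_eq_0)
    hence "B T v = - (\<mu> * B T e)" by (simp add: bilinear_rneg[OF bil] bilinear_rmul[OF bil])
    moreover have "\<mu> * B T e \<le> 0" using Te' mu by (simp add: mult_nonneg_nonpos)
    ultimately show False using vv(2) by linarith
  qed
  have "eta C w w < 0" using w2 w0 ww unfolding wider_cones_def by blast
  moreover have "fst w = 0" unfolding w_def e_def \<mu>_def by simp
  ultimately show False unfolding eta_def using inner_ge_zero[of "snd w"] by simp
qed

definition ACP :: "real set \<Rightarrow> (real \<Rightarrow> 'b::real_normed_vector) \<Rightarrow> real \<Rightarrow> real \<Rightarrow> bool" where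
  "ACP S f e d \<longleftrightarrow> (\<forall>(n::nat) (u::nat \<Rightarrow> real) (v::nat \<Rightarrow> real).
       (\<forall>i<n. u i \<le> v i \<and> {u i..v i} \<subseteq> S) \<and>
       (\<forall>i<n. \<forall>j<n. i \<noteq> j \<longrightarrow> v i \<le> u j \<or> v j \<le> u i) \<and>
       (\<Sum>i<n. v i - u i) < d
       \<longrightarrow> (\<Sum>i<n. norm (f (v i) - f (u i))) < e)"

lemma AC_iff: "absolutely_continuous_on S f \<longleftrightarrow> (\<forall>e>0. \<exists>d>0. ACP S f e d)"
  unfolding absolutely_continuous_on_def ACP_def by (rule refl)

lemma ACP_D:
  fixes n :: nat and u v :: "nat \<Rightarrow> real" and f :: "real \<Rightarrow> 'b::real_normed_vector"
  assumes "ACP S f e d" "\<forall>i<n. u i \<le> v i \<and> {u i..v i} \<subseteq> S"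
    "\<forall>i<n. \<forall>j<n. i \<noteq> j \<longrightarrow> v i \<le> u j \<or> v j \<le> u i" "(\<Sum>i<n. v i - u i) < d"
  shows "(\<Sum>i<n. norm (f (v i) - f (u i))) < e"
  using assms(1)[unfolded ACP_def, rule_format, of n u v] assms(2-4) by blast

lemma AC_obtain:
  assumes "absolutely_continuous_on S f" "e > 0"
  obtains d where "d > 0" "ACP S f e d"
  using assms unfolding AC_iff by blast

lemma AC_cont:
  fixes f :: "real \<Rightarrow> real"
  assumes ac: "absolutely_continuous_on {a..b} f"
  shows "continuous_on {a..b} f"
  unfolding continuous_on_iff
proof (intro ballI allI impI)
  fix x e :: real assume x: "x \<in> {a..b}" and e: "0 < e"
  obtain d where d: "d > 0" and H: "ACP {a..b} f e d" using AC_obtain[OF ac e] by blast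
  have "\<forall>x'\<in>{a..b}. dist x' x < d \<longrightarrow> dist (f x') (f x) < e"
  proof (intro ballI impI)
    fix x' assume x': "x' \<in> {a..b}" and dx: "dist x' x < d"
    have p1: "\<forall>i<(1::nat). min x x' \<le> max x x' \<and> {min x x'..max x x'} \<subseteq> {a..b}"
      using x x' by auto
    have p2: "\<forall>i<(1::nat). \<forall>j<1. i \<noteq> j \<longrightarrow> max x x' \<le> min x x' \<or> max x x' \<le> min x x'"
      by auto
    have p3: "(\<Sum>i<(1::nat). max x x' - min x x') < d"
      using dx by (auto simp: dist_real_def)
    have "(\<Sum>i<(1::nat). norm (f (max x x') - f (min x x'))) < e"
      by (rule ACP_D[OF H p1 p2 p3])
    hence lt: "\<bar>f (max x x') - f (min x x')\<bar> < e" by simp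
    show "dist (f x') (f x) < e"
    proof (cases "x \<le> x'")
      case True thus ?thesis using lt by (simp add: dist_real_def max_def min_def)
    next
      case False thus ?thesis using lt by (simp add: dist_real_def max_def min_def abs_minus_commute)
    qed
  qed
  thus "\<exists>d>0. \<forall>x'\<in>{a..b}. dist x' x < d \<longrightarrow> dist (f x') (f x) < e" using d by blast
qed

definition Es :: "(real \<Rightarrow> real) \<Rightarrow> real \<Rightarrow> real \<Rightarrow> nat \<Rightarrow> real set" where
  "Es f a b k = {s \<in> {a..b}. \<forall>t\<in>{a..b}. \<bar>t - s\<bar> < 1 / real (Suc k) \<longrightarrow>
      (t - s)^2 / real (Suc k) \<le> (f t - f s) * (t - s)}"

lemma Es_closed:
  fixes f :: "real \<Rightarrow> real"
  assumes cf: "continuous_on {a..b} f"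
  shows "closed (Es f a b k)"
proof -
  have eq: "Es f a b k = {a..b} \<inter> (\<Inter>t\<in>{a..b}. {s. 1 / real (Suc k) \<le> \<bar>t - s\<bar>} \<union>
      ({a..b} \<inter> (\<lambda>s. (f t - f s) * (t - s) - (t - s)^2 / real (Suc k)) -` {0..}))"
    unfolding Es_def by (auto simp: not_less) (meson atLeastAtMost_iff linorder_not_le)
  have c1: "closed ({s. 1 / real (Suc k) \<le> \<bar>t - s\<bar>} \<union>
      ({a..b} \<inter> (\<lambda>s. (f t - f s) * (t - s) - (t - s)^2 / real (Suc k)) -` {0..}))" for t
  proof (rule closed_Un)
    have "{s. 1 / real (Suc k) \<le> \<bar>t - s\<bar>} = - ball t (1 / real (Suc k))"
      by (auto simp: dist_real_def)
    thus "closed {s. 1 / real (Suc k) \<le> \<bar>t - s\<bar>}" using closed_Compl[OF open_ball] by simp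
    have "continuous_on {a..b} (\<lambda>s. (f t - f s) * (t - s) - (t - s)^2 / real (Suc k))"
      by (intro continuous_intros cf) auto
    thus "closed ({a..b} \<inter> (\<lambda>s. (f t - f s) * (t - s) - (t - s)^2 / real (Suc k)) -` {0..})"
      by (rule continuous_closed_preimage) auto
  qed
  show ?thesis unfolding eq using c1 by (intro closed_Int closed_INT) auto
qed

lemma Es_mono: "Es f a b k \<subseteq> Es f a b (Suc k)"
proof
  fix s assume s: "s \<in> Es f a b k"
  show "s \<in> Es f a b (Suc k)" unfolding Es_def
  proof (intro CollectI conjI ballI impI)
    show "s \<in> {a..b}" using s by (auto simp: Es_def)
    fix t assume t: "t \<in> {a..b}" "\<bar>t - s\<bar> < 1 / real (Suc (Suc k))"
    have "1 / real (Suc (Suc k)) \<le> 1 / real (Suc k)" by (simp add: frac_le)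
    hence "\<bar>t - s\<bar> < 1 / real (Suc k)" using t by linarith
    hence "(t - s)^2 / real (Suc k) \<le> (f t - f s) * (t - s)" using s t by (auto simp: Es_def)
    moreover have "(t - s)^2 / real (Suc (Suc k)) \<le> (t - s)^2 / real (Suc k)"
      by (simp add: frac_le)
    ultimately show "(t - s)^2 / real (Suc (Suc k)) \<le> (f t - f s) * (t - s)" by linarith
  qed
qed

lemma Es_deriv:
  fixes f :: "real \<Rightarrow> real"
  assumes D: "(f has_real_derivative D) (at s within {a..b})" and Dp: "D > 0" and s: "s \<in> {a..b}"
  shows "\<exists>k. s \<in> Es f a b k"
proof -
  from D have "(f has_derivative (*) D) (at s within {a..b})"
    by (simp add: has_field_derivative_def)
  then obtain d where d: "d > 0" and H: "\<And>y. y \<in> {a..b} \<Longrightarrow> norm (y - s) < d \<Longrightarrow>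
      norm (f y - f s - D * (y - s)) \<le> D / 2 * norm (y - s)"
    unfolding has_derivative_within_alt using Dp by (meson half_gt_zero)
  obtain k where k: "inverse (real (Suc k)) < min d (D/2)"
    using reals_Archimedean[of "min d (D/2)"] d Dp by auto
  have "s \<in> Es f a b k" unfolding Es_def
  proof (intro CollectI conjI ballI impI)
    show "s \<in> {a..b}" using s by auto
    fix t assume t: "t \<in> {a..b}" "\<bar>t - s\<bar> < 1 / real (Suc k)"
    define w where "w = t - s"
    define r where "r = f t - f s - D * w"
    have "1 / real (Suc k) < d" using k by (simp add: inverse_eq_divide)
    hence "\<bar>w\<bar> < d" using t w_def by linarith
    hence r: "\<bar>r\<bar> \<le> D / 2 * \<bar>w\<bar>" using H[OF t(1)] r_def w_def by simp
    have rw: "r * w \<ge> - (\<bar>r\<bar> * \<bar>w\<bar>)" using abs_ge_minus_self[of "r*w"] abs_mult[of r w] by linarith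
    have r2: "\<bar>r\<bar> * 2 \<le> D * \<bar>w\<bar>" using r by simp
    have "\<bar>r\<bar> * 2 * \<bar>w\<bar> \<le> D * \<bar>w\<bar> * \<bar>w\<bar>" using mult_right_mono[OF r2, of "\<bar>w\<bar>"] by simp
    also have "D * \<bar>w\<bar> * \<bar>w\<bar> = D * w^2" by (simp add: power2_eq_square abs_mult_self_eq mult.assoc)
    finally have a: "\<bar>r\<bar> * \<bar>w\<bar> * 2 \<le> D * w^2" by (simp add: mult.commute mult.left_commute)
    have e: "(f t - f s) * w = D * w^2 + r * w" unfolding r_def by (simp add: power2_eq_square algebra_simps)
    have 1: "D * w^2 \<le> 2 * ((f t - f s) * w)" using rw a e by linarith
    have ik: "inverse (real (Suc k)) * 2 \<le> D" using k by linarith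
    have "inverse (real (Suc k)) * 2 * w^2 \<le> D * w^2" using mult_right_mono[OF ik, of "w^2"] by simp
    hence "2 * (w^2 / real (Suc k)) \<le> D * w^2" by (simp add: divide_inverse mult.commute mult.left_commute)
    hence "w^2 / real (Suc k) \<le> (f t - f s) * w" using 1 by linarith
    thus "(t - s)^2 / real (Suc k) \<le> (f t - f s) * (t - s)" unfolding w_def .
  qed
  thus ?thesis ..
qed

definition gf :: "(real \<Rightarrow> real) \<Rightarrow> real set \<Rightarrow> real \<Rightarrow> real \<Rightarrow> real \<Rightarrow> bool" where
  "gf f E \<kappa> x y \<longleftrightarrow> (\<exists>(m::nat) (u::nat \<Rightarrow> real) (v::nat \<Rightarrow> real) (L::real).
     measure lebesgue (E \<inter> {x..y}) \<le> L \<and> (\<forall>i<m. x \<le> u i \<and> u i \<le> v i \<and> v i \<le> y) \<and>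
     (\<forall>i<m. \<forall>j<m. i \<noteq> j \<longrightarrow> v i \<le> u j \<or> v j \<le> u i) \<and>
     (\<Sum>i<m. v i - u i) = (y - x) - L \<and> L * \<kappa> + (\<Sum>i<m. f (v i) - f (u i)) \<le> f y - f x)"

lemma gfI:
  fixes m :: nat and u v :: "nat \<Rightarrow> real"
  assumes "measure lebesgue (E \<inter> {x..y}) \<le> L" "\<forall>i<m. x \<le> u i \<and> u i \<le> v i \<and> v i \<le> y"
    "\<forall>i<m. \<forall>j<m. i \<noteq> j \<longrightarrow> v i \<le> u j \<or> v j \<le> u i"
    "(\<Sum>i<m. v i - u i) = (y - x) - L" "L * \<kappa> + (\<Sum>i<m. f (v i) - f (u i)) \<le> f y - f x"
  shows "gf f E \<kappa> x y"
  unfolding gf_def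
  apply (rule exI[where x=m], rule exI[where x=u], rule exI[where x=v], rule exI[where x=L])
  using assms by (intro conjI)

lemma gfE:
  assumes "gf f E \<kappa> x y"
  obtains m :: nat and u v :: "nat \<Rightarrow> real" and L where
    "measure lebesgue (E \<inter> {x..y}) \<le> L" "\<forall>i<m. x \<le> u i \<and> u i \<le> v i \<and> v i \<le> y"
    "\<forall>i<m. \<forall>j<m. i \<noteq> j \<longrightarrow> v i \<le> u j \<or> v j \<le> u i"
    "(\<Sum>i<m. v i - u i) = (y - x) - L" "L * \<kappa> + (\<Sum>i<m. f (v i) - f (u i)) \<le> f y - f x"
  using assms unfolding gf_def
  apply (elim exE conjE)
  apply (rule that)
  apply assumption+
  done

lemma Es_sub: "Es f a b k \<subseteq> {a..b}" by (auto simp: Es_def)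

lemma Es_compact:
  assumes "continuous_on {a..b} f" shows "compact (Es f a b k)"
proof -
  have "compact (Es f a b k \<inter> {a..b})" by (intro closed_Int_compact Es_closed assms) auto
  moreover have "Es f a b k \<inter> {a..b} = Es f a b k" using Es_sub by blast
  ultimately show ?thesis by simp
qed

lemma gf_base:
  fixes f :: "real \<Rightarrow> real"
  assumes cf: "continuous_on {a..b} f" and xy: "a \<le> x" "x \<le> y" "y \<le> b"
    and small: "y - x < 1 / real (Suc k)"
  shows "gf f (Es f a b k) (1 / real (Suc k)) x y"
proof -
  define E where "E = Es f a b k"
  define S where "S = E \<inter> {x..y}"
  have cS: "compact S" unfolding S_def E_def
    by (intro closed_Int_compact Es_closed cf) auto
  show ?thesis
  proof (cases "S = {}")
    case True
    show ?thesis
      by (rule gfI[where m=1 and u="\<lambda>_. x" and v="\<lambda>_. y" and L=0]) (use True xy in \<open>auto simp: S_def E_def\<close>)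
  next
    case False
    define s1 where "s1 = Inf S"
    define s2 where "s2 = Sup S"
    have bS: "bounded S" using cS by (rule compact_imp_bounded)
    have clS: "closed S" using cS by (rule compact_imp_closed)
    have s1S: "s1 \<in> S" unfolding s1_def
      by (rule closed_contains_Inf[OF False bounded_imp_bdd_below[OF bS] clS])
    have s2S: "s2 \<in> S" unfolding s2_def
      by (rule closed_contains_Sup[OF False bounded_imp_bdd_above[OF bS] clS])
    have sub: "S \<subseteq> {s1..s2}" unfolding s1_def s2_def
      using cInf_lower[OF _ bounded_imp_bdd_below[OF bS]] cSup_upper[OF _ bounded_imp_bdd_above[OF bS]]
      by auto
    have s12: "s1 \<le> s2" using sub s1S by auto
    have mS: "measure lebesgue S \<le> s2 - s1"
    proof -
      have "measure lebesgue S \<le> measure lebesgue {s1..s2}"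
        by (rule measure_mono_fmeasurable[OF sub]) (use cS lmeasurable_compact in \<open>auto intro: fmeasurableD\<close>)
      thus ?thesis using s12 by simp
    qed
    have fs: "(s2 - s1) * (1 / real (Suc k)) \<le> f s2 - f s1"
    proof (cases "s1 = s2")
      case True thus ?thesis by simp
    next
      case False
      hence lt: "s1 < s2" using s12 by simp
      have "s1 \<in> Es f a b k" using s1S by (simp add: S_def E_def)
      moreover have "s2 \<in> {a..b}" using s2S xy by (auto simp: S_def)
      moreover have "\<bar>s2 - s1\<bar> < 1 / real (Suc k)" using s1S s2S small s12 by (auto simp: S_def)
      ultimately have "(s2 - s1)^2 / real (Suc k) \<le> (f s2 - f s1) * (s2 - s1)"
        unfolding Es_def by blast
      moreover have "(s2 - s1)^2 / real (Suc k) = ((s2 - s1) * (1 / real (Suc k))) * (s2 - s1)"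
        by (simp add: power2_eq_square)
      ultimately have X: "((s2 - s1) * (1 / real (Suc k))) * (s2 - s1) \<le> (f s2 - f s1) * (s2 - s1)"
        by linarith
      show ?thesis by (rule mult_right_le_imp_le[OF X]) (use lt in simp)
    qed
    have i2: "\<And>P. (\<forall>i<(2::nat). P i) \<longleftrightarrow> P 0 \<and> P 1" by (auto simp: less_2_cases_iff)
    show ?thesis
    proof (rule gfI[where m=2 and u="\<lambda>i. if i = 0 then x else s2" and v="\<lambda>i. if i = 0 then s1 else y"
          and L="s2 - s1"])
      show "measure lebesgue (Es f a b k \<inter> {x..y}) \<le> s2 - s1" using mS by (simp add: S_def E_def)
      show "\<forall>i<(2::nat). x \<le> (if i = 0 then x else s2) \<and> (if i = 0 then x else s2) \<le> (if i = 0 then s1 else y) \<and>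
          (if i = 0 then s1 else y) \<le> y" unfolding i2 using s1S s2S by (auto simp: S_def)
      show "\<forall>i<(2::nat). \<forall>j<(2::nat). i \<noteq> j \<longrightarrow> (if i = 0 then s1 else y) \<le> (if j = 0 then x else s2) \<or>
          (if j = 0 then s1 else y) \<le> (if i = 0 then x else s2)" unfolding i2 using s12 by auto
      show "(\<Sum>i<(2::nat). (if i = 0 then s1 else y) - (if i = 0 then x else s2)) = y - x - (s2 - s1)"
        by (simp add: numeral_2_eq_2)
      show "(s2 - s1) * (1 / real (Suc k)) + (\<Sum>i<(2::nat). f (if i = 0 then s1 else y) - f (if i = 0 then x else s2))
          \<le> f y - f x" using fs by (simp add: numeral_2_eq_2)
    qed
  qed
qed

lemma sum_split_add:
  fixes m1 m2 :: nat and g :: "nat \<Rightarrow> 'a::comm_monoid_add"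
  shows "(\<Sum>i<m1+m2. g i) = (\<Sum>i<m1. g i) + (\<Sum>i<m2. g (m1 + i))"
  by (induct m2) (auto simp: add.assoc)

lemma sum_concat:
  fixes u1 v1 u2 v2 :: "nat \<Rightarrow> real" and h :: "real \<Rightarrow> real \<Rightarrow> real"
  shows "(\<Sum>i<m1+m2. h (if i < m1 then u1 i else u2 (i - m1)) (if i < m1 then v1 i else v2 (i - m1)))
     = (\<Sum>i<m1. h (u1 i) (v1 i)) + (\<Sum>i<m2. h (u2 i) (v2 i))"
  unfolding sum_split_add by (intro arg_cong2[where f="(+)"] sum.cong) auto

lemma gf_concat:
  fixes f :: "real \<Rightarrow> real"
  assumes g1: "gf f E \<kappa> x z" and g2: "gf f E \<kappa> z y" and xz: "x \<le> z" "z \<le> y"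
    and E: "E \<in> sets lebesgue"
  shows "gf f E \<kappa> x y"
proof -
  obtain m1 :: nat and u1 v1 :: "nat \<Rightarrow> real" and L1 :: real where A: "measure lebesgue (E \<inter> {x..z}) \<le> L1" "\<forall>i<m1. x \<le> u1 i \<and> u1 i \<le> v1 i \<and> v1 i \<le> z"
    "\<forall>i<m1. \<forall>j<m1. i \<noteq> j \<longrightarrow> v1 i \<le> u1 j \<or> v1 j \<le> u1 i"
    "(\<Sum>i<m1. v1 i - u1 i) = (z - x) - L1" "L1 * \<kappa> + (\<Sum>i<m1. f (v1 i) - f (u1 i)) \<le> f z - f x"
    using g1 by (rule gfE)
  obtain m2 :: nat and u2 v2 :: "nat \<Rightarrow> real" and L2 :: real where B: "measure lebesgue (E \<inter> {z..y}) \<le> L2" "\<forall>i<m2. z \<le> u2 i \<and> u2 i \<le> v2 i \<and> v2 i \<le> y"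
    "\<forall>i<m2. \<forall>j<m2. i \<noteq> j \<longrightarrow> v2 i \<le> u2 j \<or> v2 j \<le> u2 i"
    "(\<Sum>i<m2. v2 i - u2 i) = (y - z) - L2" "L2 * \<kappa> + (\<Sum>i<m2. f (v2 i) - f (u2 i)) \<le> f y - f z"
    using g2 by (rule gfE)
  define u where "u i = (if i < m1 then u1 i else u2 (i - m1))" for i
  define v where "v i = (if i < m1 then v1 i else v2 (i - m1))" for i
  show ?thesis
  proof (rule gfI[where m="m1+m2" and u=u and v=v and L="L1+L2"])
    have "E \<inter> {x..y} = (E \<inter> {x..z}) \<union> (E \<inter> {z..y})" using xz by auto
    hence "measure lebesgue (E \<inter> {x..y}) \<le> measure lebesgue (E \<inter> {x..z}) + measure lebesgue (E \<inter> {z..y})"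
      using E by (auto intro!: measure_Un_le)
    thus "measure lebesgue (E \<inter> {x..y}) \<le> L1 + L2" using A(1) B(1) by linarith
    show "\<forall>i<m1 + m2. x \<le> u i \<and> u i \<le> v i \<and> v i \<le> y"
    proof (intro allI impI)
      fix i assume i: "i < m1 + m2"
      show "x \<le> u i \<and> u i \<le> v i \<and> v i \<le> y"
      proof (cases "i < m1")
        case True thus ?thesis using A(2) xz unfolding u_def v_def by force
      next
        case False hence "i - m1 < m2" using i by simp
        thus ?thesis using B(2) xz False unfolding u_def v_def by force
      qed
    qed
    show "\<forall>i<m1 + m2. \<forall>j<m1 + m2. i \<noteq> j \<longrightarrow> v i \<le> u j \<or> v j \<le> u i"
    proof (intro allI impI)
      fix i j assume i: "i < m1 + m2" and j: "j < m1 + m2" and ij: "i \<noteq> j"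
      show "v i \<le> u j \<or> v j \<le> u i"
      proof (cases "i < m1"; cases "j < m1")
        assume "i < m1" "j < m1" thus ?thesis using A(3) ij unfolding u_def v_def by simp
      next
        assume a: "i < m1" "\<not> j < m1"
        hence "v i \<le> z" "z \<le> u j" using A(2) B(2) j unfolding u_def v_def by auto
        thus ?thesis by simp
      next
        assume a: "\<not> i < m1" "j < m1"
        hence "v j \<le> z" "z \<le> u i" using A(2) B(2) i unfolding u_def v_def by auto
        thus ?thesis by simp
      next
        assume a: "\<not> i < m1" "\<not> j < m1"
        hence "i - m1 < m2" "j - m1 < m2" "i - m1 \<noteq> j - m1" using i j ij by auto
        thus ?thesis using B(3) a unfolding u_def v_def by simp
      qed
    qed
    show "(\<Sum>i<m1 + m2. v i - u i) = y - x - (L1 + L2)"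
      using sum_concat[of "\<lambda>a b. b - a" m1 u1 u2 v1 v2 m2] A(4) B(4) unfolding u_def v_def by simp
    have "(\<Sum>i<m1 + m2. f (v i) - f (u i)) = (\<Sum>i<m1. f (v1 i) - f (u1 i)) + (\<Sum>i<m2. f (v2 i) - f (u2 i))"
      using sum_concat[of "\<lambda>a b. f b - f a" m1 u1 u2 v1 v2 m2] unfolding u_def v_def by simp
    thus "(L1 + L2) * \<kappa> + (\<Sum>i<m1 + m2. f (v i) - f (u i)) \<le> f y - f x"
      using A(5) B(5) by (simp add: algebra_simps)
  qed
qed

lemma gf_all:
  fixes f :: "real \<Rightarrow> real"
  assumes cf: "continuous_on {a..b} f" and xy: "a \<le> x" "x \<le> y" "y \<le> b"
  shows "gf f (Es f a b k) (1 / real (Suc k)) x y"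
proof -
  define \<kappa> where "\<kappa> = 1 / real (Suc k)"
  define h where "h = \<kappa> / 2"
  have kp: "\<kappa> > 0" unfolding \<kappa>_def by simp
  hence hp: "h > 0" and hk: "h < \<kappa>" unfolding h_def by auto
  have E: "Es f a b k \<in> sets lebesgue"
    using lmeasurable_compact[OF Es_compact[OF cf]] by (rule fmeasurableD)
  have claim: "\<forall>x y. a \<le> x \<and> x \<le> y \<and> y \<le> b \<and> y - x \<le> real n * h \<longrightarrow> gf f (Es f a b k) \<kappa> x y" for n
  proof (induct n)
    case 0
    show ?case
    proof (intro allI impI)
      fix x y assume H: "a \<le> x \<and> x \<le> y \<and> y \<le> b \<and> y - x \<le> real 0 * h"
      hence "y - x < \<kappa>" using kp by simp
      thus "gf f (Es f a b k) \<kappa> x y" unfolding \<kappa>_def by (intro gf_base[OF cf]) (use H in auto)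
    qed
  next
    case (Suc n)
    show ?case
    proof (intro allI impI)
      fix x y assume xy: "a \<le> x \<and> x \<le> y \<and> y \<le> b \<and> y - x \<le> real (Suc n) * h"
      show "gf f (Es f a b k) \<kappa> x y"
      proof (cases "y - x \<le> h")
        case True
        hence "y - x < \<kappa>" using hk by simp
        thus ?thesis unfolding \<kappa>_def by (intro gf_base[OF cf]) (use xy in auto)
      next
        case False
        define z where "z = x + h"
        have "z - x < \<kappa>" using hk unfolding z_def by simp
        hence g1: "gf f (Es f a b k) \<kappa> x z"
          unfolding \<kappa>_def by (intro gf_base[OF cf]) (use xy False hp in \<open>auto simp: z_def\<close>)
        have "y - z \<le> real n * h" using xy unfolding z_def by (simp add: algebra_simps)
        moreover have "a \<le> z" "z \<le> y" using xy False hp unfolding z_def by auto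
        ultimately have g2: "gf f (Es f a b k) \<kappa> z y" using Suc xy by blast
        show ?thesis by (rule gf_concat[OF g1 g2 _ _ E]) (use xy False hp in \<open>auto simp: z_def\<close>)
      qed
    qed
  qed
  obtain n where n: "(y - x) / h \<le> real n" using real_arch_simple by blast
  hence "y - x \<le> real n * h" using hp by (simp add: pos_divide_le_eq)
  thus ?thesis using claim xy unfolding \<kappa>_def by blast
qed

lemma Es_sets: "continuous_on {a..b} f \<Longrightarrow> Es f a b k \<in> sets lebesgue"
  using lmeasurable_compact[OF Es_compact] by (rule fmeasurableD)

lemma meas_split:
  fixes x y :: real
  assumes E: "E \<in> sets lebesgue" and xy: "x \<le> y"
  shows "y - x \<le> measure lebesgue (E \<inter> {x..y}) + measure lebesgue ({x..y} - E)"
proof -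
  have "{x..y} = (E \<inter> {x..y}) \<union> ({x..y} - E)" by auto
  hence "measure lebesgue {x..y} \<le> measure lebesgue (E \<inter> {x..y}) + measure lebesgue ({x..y} - E)"
    using E by (metis measure_Un_le sets.Diff sets.Int atLeastAtMost_borel sets_lborel
        lmeasurable_cbox fmeasurableD box_real(2))
  thus ?thesis using xy by simp
qed

lemma meas_diff_mono:
  fixes a b x y :: real
  assumes E: "E \<in> sets lebesgue" and "a \<le> x" "y \<le> b"
  shows "measure lebesgue ({x..y} - E) \<le> measure lebesgue ({a..b} - E)"
proof (rule measure_mono_fmeasurable)
  show "{x..y} - E \<subseteq> {a..b} - E" using assms by (auto intro: order_trans)
  show "{x..y} - E \<in> sets lebesgue" using E by (intro sets.Diff) auto
  show "{a..b} - E \<in> fmeasurable lebesgue" using E by (intro fmeasurable_Diff) auto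
qed

lemma Es_small:
  fixes f :: "real \<Rightarrow> real"
  assumes cf: "continuous_on {a..b} f" and N: "negligible N"
    and cov: "\<forall>s\<in>{a..b} - N. \<exists>k. s \<in> Es f a b k" and that: "\<eta> > 0"
  shows "\<exists>k. measure lebesgue ({a..b} - Es f a b k) < \<eta>"
proof -
  define D where "D k = {a..b} - Es f a b k" for k
  have Dl: "D k \<in> fmeasurable lebesgue" for k
    unfolding D_def using Es_sets[OF cf] by (intro fmeasurable_Diff) auto
  have mono: "Es f a b m \<subseteq> Es f a b n" if "m \<le> n" for m n
    using lift_Suc_mono_le[of "Es f a b", OF Es_mono that] .
  have dec: "decseq D" unfolding decseq_def D_def using mono by blast
  have lim: "(\<lambda>n. measure lebesgue (D n)) \<longlonglongrightarrow> measure lebesgue (\<Inter>i. D i)"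
  proof (rule Lim_measure_decseq[OF _ dec])
    show "range D \<subseteq> sets lebesgue" using Dl by (auto intro: fmeasurableD)
    show "emeasure lebesgue (D i) \<noteq> \<infinity>" for i using fmeasurableD2[OF Dl[of i]] by simp
  qed
  have "(\<Inter>i. D i) \<subseteq> N" using cov unfolding D_def by blast
  hence "measure lebesgue (\<Inter>i. D i) = 0" using N negligible_subset negligible_imp_measure0 by blast
  with lim have "eventually (\<lambda>n. measure lebesgue (D n) < \<eta>) sequentially"
    using that by (auto dest: order_tendstoD(2))
  then obtain n where "measure lebesgue (D n) < \<eta>" by (auto simp: eventually_sequentially)
  thus ?thesis unfolding D_def by blast
qed

lemma f_mono:
  fixes f :: "real \<Rightarrow> real"
  assumes ac: "absolutely_continuous_on {a..b} f"
    and small: "\<And>\<eta>. \<eta> > 0 \<Longrightarrow> \<exists>k. measure lebesgue ({a..b} - Es f a b k) < \<eta>"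
    and xy: "a \<le> x" "x \<le> y" "y \<le> b"
  shows "f x \<le> f y"
proof (rule field_le_epsilon)
  fix \<epsilon> :: real assume e: "\<epsilon> > 0"
  have cf: "continuous_on {a..b} f" by (rule AC_cont[OF ac])
  obtain d where d: "d > 0" and H: "ACP {a..b} f \<epsilon> d" using AC_obtain[OF ac e] by blast
  obtain k where k: "measure lebesgue ({a..b} - Es f a b k) < d" using small d by blast
  define E where "E = Es f a b k"
  have E: "E \<in> sets lebesgue" unfolding E_def by (rule Es_sets[OF cf])
  obtain m :: nat and u v :: "nat \<Rightarrow> real" and L :: real where A:
    "measure lebesgue (E \<inter> {x..y}) \<le> L" "\<forall>i<m. x \<le> u i \<and> u i \<le> v i \<and> v i \<le> y"
    "\<forall>i<m. \<forall>j<m. i \<noteq> j \<longrightarrow> v i \<le> u j \<or> v j \<le> u i"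
    "(\<Sum>i<m. v i - u i) = (y - x) - L" "L * (1 / real (Suc k)) + (\<Sum>i<m. f (v i) - f (u i)) \<le> f y - f x"
    using gf_all[OF cf xy, of k] unfolding E_def by (rule gfE)
  have "(\<Sum>i<m. v i - u i) \<le> measure lebesgue ({x..y} - E)"
    using A(1,4) meas_split[OF E xy(2)] by linarith
  also have "\<dots> \<le> measure lebesgue ({a..b} - E)" by (rule meas_diff_mono[OF E xy(1,3)])
  finally have "(\<Sum>i<m. v i - u i) < d" using k unfolding E_def by linarith
  moreover have "\<forall>i<m. u i \<le> v i \<and> {u i..v i} \<subseteq> {a..b}" using A(2) xy by force
  ultimately have S: "(\<Sum>i<m. norm (f (v i) - f (u i))) < \<epsilon>" using ACP_D[OF H _ A(3)] by blast
  have "(\<Sum>i<m. - norm (f (v i) - f (u i))) \<le> (\<Sum>i<m. f (v i) - f (u i))"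
    by (rule sum_mono) auto
  hence S2: "- \<epsilon> < (\<Sum>i<m. f (v i) - f (u i))" using S by (simp add: sum_negf)
  have "L \<ge> 0" using A(1) measure_nonneg[of lebesgue "E \<inter> {x..y}"] by linarith
  hence "L * (1 / real (Suc k)) \<ge> 0" by simp
  thus "f x \<le> f y + \<epsilon>" using A(5) S2 by linarith
qed

lemma f_lower:
  fixes f :: "real \<Rightarrow> real"
  assumes cf: "continuous_on {a..b} f"
    and mono: "\<And>x y. a \<le> x \<Longrightarrow> x \<le> y \<Longrightarrow> y \<le> b \<Longrightarrow> f x \<le> f y"
    and xy: "a \<le> x" "x \<le> y" "y \<le> b"
  shows "measure lebesgue (Es f a b k \<inter> {x..y}) * (1 / real (Suc k)) \<le> f y - f x"
proof -
  obtain m :: nat and u v :: "nat \<Rightarrow> real" and L :: real where A: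
    "measure lebesgue (Es f a b k \<inter> {x..y}) \<le> L" "\<forall>i<m. x \<le> u i \<and> u i \<le> v i \<and> v i \<le> y"
    "\<forall>i<m. \<forall>j<m. i \<noteq> j \<longrightarrow> v i \<le> u j \<or> v j \<le> u i"
    "(\<Sum>i<m. v i - u i) = (y - x) - L" "L * (1 / real (Suc k)) + (\<Sum>i<m. f (v i) - f (u i)) \<le> f y - f x"
    using gf_all[OF cf xy, of k] by (rule gfE)
  have "(\<Sum>i<m. f (v i) - f (u i)) \<ge> 0"
    by (rule sum_nonneg) (use A(2) xy mono in force)
  moreover have "measure lebesgue (Es f a b k \<inter> {x..y}) * (1 / real (Suc k)) \<le> L * (1 / real (Suc k))"
    using A(1) by (intro mult_right_mono) auto
  ultimately show ?thesis using A(5) by linarith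
qed

lemma pos_meas:
  fixes f :: "real \<Rightarrow> real"
  assumes cf: "continuous_on {a..b} f"
    and small: "\<And>\<eta>. \<eta> > 0 \<Longrightarrow> \<exists>k. measure lebesgue ({a..b} - Es f a b k) < \<eta>"
    and xy: "a \<le> x" "x < y" "y \<le> b"
  shows "\<exists>k. measure lebesgue (Es f a b k \<inter> {x..y}) > 0"
proof -
  obtain k where k: "measure lebesgue ({a..b} - Es f a b k) < y - x" using small xy by force
  have E: "Es f a b k \<in> sets lebesgue" by (rule Es_sets[OF cf])
  have "y - x \<le> measure lebesgue (Es f a b k \<inter> {x..y}) + measure lebesgue ({x..y} - Es f a b k)"
    using meas_split[OF E] xy by simp
  moreover have "measure lebesgue ({x..y} - Es f a b k) \<le> measure lebesgue ({a..b} - Es f a b k)"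
    by (rule meas_diff_mono[OF E xy(1,3)])
  ultimately show ?thesis using k by (intro exI[of _ k]) linarith
qed

lemma inv_AC:
  fixes f g :: "real \<Rightarrow> real"
  assumes cf: "continuous_on {a..b} f"
    and mono: "\<And>x y. a \<le> x \<Longrightarrow> x \<le> y \<Longrightarrow> y \<le> b \<Longrightarrow> f x \<le> f y"
    and small: "\<And>\<eta>. \<eta> > 0 \<Longrightarrow> \<exists>k. measure lebesgue ({a..b} - Es f a b k) < \<eta>"
    and gab: "\<And>t. t \<in> {c..d} \<Longrightarrow> g t \<in> {a..b}"
    and fg: "\<And>t. t \<in> {c..d} \<Longrightarrow> f (g t) = t"
    and gmono: "\<And>s t. s \<in> {c..d} \<Longrightarrow> t \<in> {c..d} \<Longrightarrow> s \<le> t \<Longrightarrow> g s \<le> g t"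
  shows "absolutely_continuous_on {c..d} g"
  unfolding AC_iff
proof (intro allI impI)
  fix \<epsilon> :: real assume e: "\<epsilon> > 0"
  obtain k where k: "measure lebesgue ({a..b} - Es f a b k) < \<epsilon> / 2" using small[of "\<epsilon> / 2"] e by auto
  define E where "E = Es f a b k"
  have E: "E \<in> sets lebesgue" unfolding E_def by (rule Es_sets[OF cf])
  define \<kappa> where "\<kappa> = 1 / real (Suc k)"
  have kp: "\<kappa> > 0" unfolding \<kappa>_def by simp
  have "ACP {c..d} g \<epsilon> (\<kappa> * (\<epsilon> / 2))" unfolding ACP_def
  proof (intro allI impI, elim conjE)
    fix n :: nat and u v :: "nat \<Rightarrow> real"
    assume P1: "\<forall>i<n. u i \<le> v i \<and> {u i..v i} \<subseteq> {c..d}"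
      and P2: "\<forall>i<n. \<forall>j<n. i \<noteq> j \<longrightarrow> v i \<le> u j \<or> v j \<le> u i"
      and P3: "(\<Sum>i<n. v i - u i) < \<kappa> * (\<epsilon> / 2)"
    define x where "x i = g (u i)" for i
    define y where "y i = g (v i)" for i
    have uv: "u i \<in> {c..d}" "v i \<in> {c..d}" "u i \<le> v i" if "i < n" for i
      using P1 that by auto
    have xy: "a \<le> x i" "x i \<le> y i" "y i \<le> b" if "i < n" for i
      using gab[OF uv(1)[OF that]] gab[OF uv(2)[OF that]] gmono[OF uv[OF that]] that
      unfolding x_def y_def by auto
    have nrm: "norm (g (v i) - g (u i)) = y i - x i" if "i < n" for i
      using xy[OF that] unfolding x_def y_def by simp
    have low: "measure lebesgue (E \<inter> {x i..y i}) * \<kappa> \<le> v i - u i" if "i < n" for i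
      using f_lower[OF cf mono xy[OF that], of k] fg[OF uv(1)[OF that]] fg[OF uv(2)[OF that]]
      unfolding E_def \<kappa>_def x_def y_def by simp
    have "(\<Sum>i<n. measure lebesgue (E \<inter> {x i..y i})) * \<kappa> = (\<Sum>i<n. measure lebesgue (E \<inter> {x i..y i}) * \<kappa>)"
      by (simp add: sum_distrib_right)
    also have "\<dots> \<le> (\<Sum>i<n. v i - u i)" by (rule sum_mono) (use low in auto)
    also have "\<dots> < \<kappa> * (\<epsilon> / 2)" by (rule P3)
    finally have S1: "(\<Sum>i<n. measure lebesgue (E \<inter> {x i..y i})) < \<epsilon> / 2"
      using kp by (simp add: mult.commute)
    define F where "F i = {x i..y i} - E" for i
    have Fl: "F i \<in> lmeasurable" for i unfolding F_def using E by (intro fmeasurable_Diff) auto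
    have pw: "pairwise (\<lambda>i j. negligible (F i \<inter> F j)) {..<n}"
      unfolding pairwise_def
    proof (intro ballI impI)
      fix i j assume i: "i \<in> {..<n}" and j: "j \<in> {..<n}" and ij: "i \<noteq> j"
      have "v i \<le> u j \<or> v j \<le> u i" using P2 i j ij by auto
      thus "negligible (F i \<inter> F j)"
      proof
        assume "v i \<le> u j"
        hence "y i \<le> x j" unfolding x_def y_def using gmono uv i j by auto
        hence "F i \<inter> F j \<subseteq> {y i}" unfolding F_def by auto
        thus ?thesis by (rule negligible_subset[OF negligible_sing])
      next
        assume "v j \<le> u i"
        hence "y j \<le> x i" unfolding x_def y_def using gmono uv i j by auto
        hence "F i \<inter> F j \<subseteq> {y j}" unfolding F_def by auto
        thus ?thesis by (rule negligible_subset[OF negligible_sing])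
      qed
    qed
    have "(\<Sum>i<n. measure lebesgue (F i)) = measure lebesgue (\<Union>(F ` {..<n}))"
      by (rule measure_negligible_finite_Union_image[symmetric]) (use Fl pw in auto)
    also have "\<dots> \<le> measure lebesgue ({a..b} - E)"
    proof (rule measure_mono_fmeasurable)
      show "\<Union>(F ` {..<n}) \<subseteq> {a..b} - E"
      proof (rule UN_least)
        fix i assume "i \<in> {..<n}"
        hence "a \<le> x i" "y i \<le> b" using xy by auto
        thus "F i \<subseteq> {a..b} - E" unfolding F_def by auto
      qed
      show "\<Union>(F ` {..<n}) \<in> sets lebesgue"
        by (rule sets.finite_UN) (use Fl fmeasurableD in auto)
      show "{a..b} - E \<in> fmeasurable lebesgue" using E by (intro fmeasurable_Diff) auto
    qed
    finally have S2: "(\<Sum>i<n. measure lebesgue (F i)) < \<epsilon> / 2" using k unfolding E_def by linarith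
    have "(\<Sum>i<n. norm (g (v i) - g (u i))) = (\<Sum>i<n. y i - x i)" by (rule sum.cong) (use nrm in auto)
    also have "\<dots> \<le> (\<Sum>i<n. measure lebesgue (E \<inter> {x i..y i}) + measure lebesgue (F i))"
    proof (rule sum_mono)
      fix i assume "i \<in> {..<n}"
      hence "x i \<le> y i" using xy by auto
      thus "y i - x i \<le> measure lebesgue (E \<inter> {x i..y i}) + measure lebesgue (F i)"
        using meas_split[OF E, of "x i" "y i"] unfolding F_def by simp
    qed
    also have "\<dots> = (\<Sum>i<n. measure lebesgue (E \<inter> {x i..y i})) + (\<Sum>i<n. measure lebesgue (F i))"
      by (rule sum.distrib)
    also have "\<dots> < \<epsilon>" using S1 S2 by linarith
    finally show "(\<Sum>i<n. norm (g (v i) - g (u i))) < \<epsilon>" .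
  qed
  moreover have "\<kappa> * (\<epsilon> / 2) > 0" using kp e by simp
  ultimately show "\<exists>\<delta>>0. ACP {c..d} g \<epsilon> \<delta>" by blast
qed

lemma AC_fst:
  fixes h :: "real \<Rightarrow> 'a::real_normed_vector \<times> 'b::real_normed_vector"
  assumes "absolutely_continuous_on S h"
  shows "absolutely_continuous_on S (\<lambda>s. fst (h s))"
  unfolding AC_iff
proof (intro allI impI)
  fix e :: real assume e: "e > 0"
  obtain d where d: "d > 0" and H: "ACP S h e d" using AC_obtain[OF assms e] by blast
  have "ACP S (\<lambda>s. fst (h s)) e d" unfolding ACP_def
  proof (intro allI impI, elim conjE)
    fix n :: nat and u v :: "nat \<Rightarrow> real"
    assume P1: "\<forall>i<n. u i \<le> v i \<and> {u i..v i} \<subseteq> S"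
      and P2: "\<forall>i<n. \<forall>j<n. i \<noteq> j \<longrightarrow> v i \<le> u j \<or> v j \<le> u i"
      and P3: "(\<Sum>i<n. v i - u i) < d"
    have "(\<Sum>i<n. norm (fst (h (v i)) - fst (h (u i)))) \<le> (\<Sum>i<n. norm (h (v i) - h (u i)))"
    proof (rule sum_mono)
      fix i
      have "norm (fst (h (v i) - h (u i))) \<le> norm (h (v i) - h (u i))"
        using norm_fst_le[of "fst (h (v i) - h (u i))" "snd (h (v i) - h (u i))", unfolded prod.collapse] .
      thus "norm (fst (h (v i)) - fst (h (u i))) \<le> norm (h (v i) - h (u i))" by simp
    qed
    also have "\<dots> < e" by (rule ACP_D[OF H P1 P2 P3])
    finally show "(\<Sum>i<n. norm (fst (h (v i)) - fst (h (u i)))) < e" .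
  qed
  thus "\<exists>d>0. ACP S (\<lambda>s. fst (h s)) e d" using d by blast
qed

lemma deriv_fst:
  fixes h :: "real \<Rightarrow> real \<times> 'b::real_normed_vector"
  assumes "(h has_vector_derivative v) (at s within S)"
  shows "((\<lambda>x. fst (h x)) has_real_derivative fst v) (at s within S)"
proof -
  have "(h has_derivative (\<lambda>x. x *\<^sub>R v)) (at s within S)"
    using assms by (simp add: has_vector_derivative_def)
  hence "((\<lambda>x. fst (h x)) has_derivative (\<lambda>x. fst (x *\<^sub>R v))) (at s within S)"
    by (rule has_derivative_fst)
  moreover have "(\<lambda>x. fst (x *\<^sub>R v)) = (*) (fst v)" by (auto simp: fun_eq_iff)
  ultimately show ?thesis by (simp add: has_field_derivative_def)
qed

theorem lemma2p8:
  fixes U :: "'m::t2_space set"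
    and \<phi> :: "'m \<Rightarrow> real \<times> (real ^ ('n::finite))"
    and G :: "real \<times> (real ^ ('n::finite)) \<Rightarrow> real \<times> (real ^ 'n) \<Rightarrow> real \<times> (real ^ 'n) \<Rightarrow> real"
    and T :: "real \<times> (real ^ ('n::finite)) \<Rightarrow> real \<times> (real ^ 'n)"
    and p :: 'm and L :: "real set" and V :: "(real ^ ('n::finite)) set"
    and \<gamma> :: "real \<Rightarrow> 'm" and a b :: real
  assumes metric_lorentz: "\<forall>q\<in>L \<times> V. lorentzian_form (G q)"
    and metric_cont: "\<forall>X Y. continuous_on (L \<times> V) (\<lambda>q. G q X Y)"
    and time_orient: "continuous_on (L \<times> V) T" "\<forall>q\<in>L \<times> V. G q (T q) (T q) < 0"
    and dt_future: "\<forall>q\<in>L \<times> V. G q (T q) (1, 0) < 0"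
    and cyl: "cylindrical_chart U \<phi> G p L V"
    and ab: "a \<le> b"
    and in_U: "\<gamma> ` {a..b} \<subseteq> U"
    and ac: "absolutely_continuous_on {a..b} (\<phi> \<circ> \<gamma>)"
    and causal: "\<exists>N. N \<in> null_sets lborel \<and>
       (\<forall>s\<in>{a..b} - N. \<exists>v. ((\<phi> \<circ> \<gamma>) has_vector_derivative v) (at s within {a..b}) \<and>
          future_causal (G (\<phi> (\<gamma> s))) (T (\<phi> (\<gamma> s))) v)"
  shows "\<exists>c d \<phi>'. c \<le> d \<and> strict_mono_on {c..d} \<phi>' \<and> \<phi>' ` {c..d} = {a..b} \<and>
           absolutely_continuous_on {c..d} \<phi>' \<and>
           (\<forall>t\<in>{c..d}. \<phi> (\<gamma> (\<phi>' t)) = (t, snd (\<phi> (\<gamma> (\<phi>' t)))))"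
proof -
  have "\<exists>\<psi>. homeomorphism U (L \<times> V) \<phi> \<psi>" using cyl unfolding cylindrical_chart_def by blast
  then obtain \<psi> where hom: "homeomorphism U (L \<times> V) \<phi> \<psi>" by blast
  have "\<exists>C>1. \<forall>q\<in>L \<times> V. wider_cones (eta (inverse C)) (G q) \<and> wider_cones (G q) (eta C)"
    using cyl unfolding cylindrical_chart_def by blast
  then obtain C where C1: "C > 1"
    and Cw: "\<forall>q\<in>L \<times> V. wider_cones (eta (inverse C)) (G q) \<and> wider_cones (G q) (eta C)" by blast
  have img: "\<phi> ` U = L \<times> V" using hom by (rule homeomorphism_image1)
  define f where "f = (\<lambda>s. fst (\<phi> (\<gamma> s)))"
  have acf: "absolutely_continuous_on {a..b} f"
    using AC_fst[OF ac[unfolded comp_def]] unfolding f_def .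
  have cf: "continuous_on {a..b} f" by (rule AC_cont[OF acf])
  obtain N where N: "N \<in> null_sets lborel" and HN: "\<forall>s\<in>{a..b} - N. \<exists>v. ((\<phi> \<circ> \<gamma>) has_vector_derivative v) (at s within {a..b}) \<and>
          future_causal (G (\<phi> (\<gamma> s))) (T (\<phi> (\<gamma> s))) v"
    using causal by blast
  have negN: "negligible N" by (simp add: negligible_iff_null_sets null_sets_completionI N)
  have cov: "\<forall>s\<in>{a..b} - N. \<exists>k. s \<in> Es f a b k"
  proof
    fix s assume s: "s \<in> {a..b} - N"
    obtain v where dv: "((\<phi> \<circ> \<gamma>) has_vector_derivative v) (at s within {a..b})"
      and fc: "future_causal (G (\<phi> (\<gamma> s))) (T (\<phi> (\<gamma> s))) v" using HN s by blast
    have q: "\<phi> (\<gamma> s) \<in> L \<times> V" using in_U s img by blast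
    have cw: "wider_cones (eta (inverse C)) (G (\<phi> (\<gamma> s)))" "wider_cones (G (\<phi> (\<gamma> s))) (eta C)"
      using Cw q by auto
    have vp: "fst v > 0"
      by (rule time_pos[OF metric_lorentz[rule_format, OF q] time_orient(2)[rule_format, OF q]
            dt_future[rule_format, OF q] C1 cw fc])
    have "(f has_real_derivative fst v) (at s within {a..b})"
      using deriv_fst[OF dv[unfolded comp_def]] unfolding f_def .
    thus "\<exists>k. s \<in> Es f a b k" using Es_deriv vp s by blast
  qed
  have small: "\<exists>k. measure lebesgue ({a..b} - Es f a b k) < \<eta>" if "\<eta> > 0" for \<eta>
    by (rule Es_small[OF cf negN cov that])
  have mono: "f x \<le> f y" if "a \<le> x" "x \<le> y" "y \<le> b" for x y
    by (rule f_mono[OF acf small that])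
  have strict: "f x < f y" if xy: "a \<le> x" "x < y" "y \<le> b" for x y
  proof -
    obtain k where k: "measure lebesgue (Es f a b k \<inter> {x..y}) > 0"
      using pos_meas[OF cf small xy] by blast
    have "measure lebesgue (Es f a b k \<inter> {x..y}) * (1 / real (Suc k)) \<le> f y - f x"
      using f_lower[OF cf mono] xy by simp
    moreover have "measure lebesgue (Es f a b k \<inter> {x..y}) * (1 / real (Suc k)) > 0" using k by simp
    ultimately show ?thesis by linarith
  qed
  have uniq: "s1 = s2" if "s1 \<in> {a..b}" "s2 \<in> {a..b}" "f s1 = f s2" for s1 s2
  proof (rule ccontr)
    assume "s1 \<noteq> s2"
    hence "s1 < s2 \<or> s2 < s1" by linarith
    thus False using strict[of s1 s2] strict[of s2 s1] that by auto
  qed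
  have ex1: "\<exists>!s. s \<in> {a..b} \<and> f s = t" if t: "t \<in> {f a..f b}" for t
  proof -
    obtain s where "a \<le> s" "s \<le> b" "f s = t" using IVT'[of f a t b] t ab cf by auto
    thus ?thesis using uniq by auto
  qed
  define g where "g t = (THE s. s \<in> {a..b} \<and> f s = t)" for t
  have gprop: "g t \<in> {a..b} \<and> f (g t) = t" if "t \<in> {f a..f b}" for t
    unfolding g_def by (rule theI'[OF ex1[OF that]])
  have gab: "g t \<in> {a..b}" if "t \<in> {f a..f b}" for t using gprop[OF that] by blast
  have fg: "f (g t) = t" if "t \<in> {f a..f b}" for t using gprop[OF that] by blast
  have fab: "f s \<in> {f a..f b}" if "s \<in> {a..b}" for s using mono that by auto
  have gf: "g (f s) = s" if "s \<in> {a..b}" for s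
    using uniq[OF gab[OF fab[OF that]] that fg[OF fab[OF that]]] .
  have gmono: "g s \<le> g t" if "s \<in> {f a..f b}" "t \<in> {f a..f b}" "s \<le> t" for s t
  proof (rule ccontr)
    assume "\<not> g s \<le> g t"
    hence "f (g t) < f (g s)" using strict gab that by (meson atLeastAtMost_iff not_le)
    thus False using fg that by simp
  qed
  have gstrict: "strict_mono_on {f a..f b} g" unfolding strict_mono_on_def
  proof (intro allI impI, elim conjE)
    fix s t assume s: "s \<in> {f a..f b}" and t: "t \<in> {f a..f b}" and st: "s < t"
    have "g s \<le> g t" using gmono s t st by simp
    moreover have "g s \<noteq> g t"
    proof
      assume "g s = g t"
      hence "f (g s) = f (g t)" by simp
      thus False using fg[OF s] fg[OF t] st by simp
    qed
    ultimately show "g s < g t" by simp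
  qed
  have gimg: "g ` {f a..f b} = {a..b}"
  proof
    show "g ` {f a..f b} \<subseteq> {a..b}" using gab by blast
    show "{a..b} \<subseteq> g ` {f a..f b}"
    proof
      fix s assume "s \<in> {a..b}"
      thus "s \<in> g ` {f a..f b}" using gf fab by (metis image_eqI)
    qed
  qed
  have gac: "absolutely_continuous_on {f a..f b} g"
    by (rule inv_AC[OF cf mono small gab fg gmono]) auto
  have final: "\<forall>t\<in>{f a..f b}. \<phi> (\<gamma> (g t)) = (t, snd (\<phi> (\<gamma> (g t))))"
  proof
    fix t assume t: "t \<in> {f a..f b}"
    have "fst (\<phi> (\<gamma> (g t))) = t" using fg[OF t] unfolding f_def by simp
    thus "\<phi> (\<gamma> (g t)) = (t, snd (\<phi> (\<gamma> (g t))))" by (metis prod.collapse)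
  qed
  have "f a \<le> f b" using mono ab by simp
  thus ?thesis using gstrict gimg gac final by blast
qed

end
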